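(* Let $f$ be a continuous map on a compact metric space $\mathbf{M}$, and let $(U_n)$ be a nested sequence of subsets ($U_{n+1}\subset U_n$, not necessarily open) such that $\bigcap_nU_n=\bigcap_n\overline{U_n}=:\Lambda$. Then $\pi(U_n)\to\infty$ if and only if $\Lambda$ contains no periodic point and $\Lambda$ is contained in a fundamental domain of $f$, i.e., $\Lambda$ intersects every orbit at most once.
   Context: For $U\subset\mathbf{M}$, the period of $U$ is $\pi(U)=\min\{k>0:f^{-k}U\cap U\neq\emptyset\}$ (with $\pi(U)=\infty$ if no such $k$ exists). The orbit of $x$ is $\{f^k(x):k\ge0\}$. *)

theory Defs
  imports "HOL-Analysis.Analysis"
begin

definition period :: "('a \<Rightarrow> 'a) \<Rightarrow> 'a set \<Rightarrow> enat" where
  "period f U =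
     (if \<exists>k>0. (f ^^ k) -` U \<inter> U \<noteq> {}
      then enat (LEAST k. k > 0 \<and> (f ^^ k) -` U \<inter> U \<noteq> {})
      else \<infinity>)"

definition orbit :: "('a \<Rightarrow> 'a) \<Rightarrow> 'a \<Rightarrow> 'a set" where
  "orbit f x = {(f ^^ k) x | k. k \<ge> 0}"

definition periodic_point :: "('a \<Rightarrow> 'a) \<Rightarrow> 'a \<Rightarrow> bool" where
  "periodic_point f x \<longleftrightarrow> (\<exists>k>0. (f ^^ k) x = x)"

end

theory Submission
  imports Defs
begin

lemma period_le:
  assumes "k > 0" "u \<in> U" "(f ^^ k) u \<in> U"
  shows "period f U \<le> enat k"
proof -
  have ex: "\<exists>k>0. (f ^^ k) -` U \<inter> U \<noteq> {}" using assms by blast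
  have "(LEAST k. k > 0 \<and> (f ^^ k) -` U \<inter> U \<noteq> {}) \<le> k"
    by (rule Least_le) (use assms in blast)
  then show ?thesis using ex unfolding period_def by simp
qed

lemma period_gt:
  assumes "\<And>k u. 0 < k \<Longrightarrow> k \<le> K \<Longrightarrow> u \<in> U \<Longrightarrow> (f ^^ k) u \<notin> U"
  shows "enat K < period f U"
proof (cases "\<exists>k>0. (f ^^ k) -` U \<inter> U \<noteq> {}")
  case True
  let ?m = "LEAST k. k > 0 \<and> (f ^^ k) -` U \<inter> U \<noteq> {}"
  have "?m > 0 \<and> (f ^^ ?m) -` U \<inter> U \<noteq> {}"
    by (rule LeastI_ex) (use True in blast)
  then obtain u where "?m > 0" "u \<in> U" "(f ^^ ?m) u \<in> U" by blast
  then have "?m > K" using assms not_le by blast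
  then show ?thesis using True unfolding period_def by simp
next
  case False
  have "period f U = \<infinity>" unfolding period_def by (rule if_not_P[OF False])
  then show ?thesis by simp
qed

lemma funpow_cont:
  assumes "continuous_on M f" "f ` M \<subseteq> M"
  shows "continuous_on M (f ^^ k) \<and> (f ^^ k) ` M \<subseteq> M"
proof (induction k)
  case 0
  then show ?case by (simp add: continuous_on_id)
next
  case (Suc k)
  have "continuous_on M (f \<circ> f ^^ k)"
    by (rule continuous_on_compose) (use assms Suc in \<open>auto intro: continuous_on_subset\<close>)
  then show ?case using Suc assms by auto
qed

theorem proposition6p2:
  fixes M :: "'a::metric_space set" and f :: "'a \<Rightarrow> 'a"
    and U :: "nat \<Rightarrow> 'a set" and \<Lambda> :: "'a set"
  assumes "compact M"
    and "continuous_on M f" and "f ` M \<subseteq> M"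
    and "\<And>n. U n \<subseteq> M"
    and "\<And>n. U (Suc n) \<subseteq> U n"
    and "\<Lambda> = (\<Inter>n. U n)"
    and "(\<Inter>n. U n) = (\<Inter>n. closure (U n))"
  shows "(\<lambda>n. period f (U n)) \<longlonglongrightarrow> \<infinity> \<longleftrightarrow>
         ((\<forall>x\<in>\<Lambda>. \<not> periodic_point f x) \<and>
          (\<forall>x\<in>M. \<forall>y z. y \<in> orbit f x \<inter> \<Lambda> \<and> z \<in> orbit f x \<inter> \<Lambda> \<longrightarrow> y = z))"
proof -
  have mono: "U m \<subseteq> U n" if "n \<le> m" for m n
    using that by (induction rule: dec_induct) (use assms(5) in blast)+
  define P where "P \<longleftrightarrow> (\<exists>y k. k > 0 \<and> y \<in> \<Lambda> \<and> (f ^^ k) y \<in> \<Lambda>)"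
  have R: "((\<forall>x\<in>\<Lambda>. \<not> periodic_point f x) \<and>
          (\<forall>x\<in>M. \<forall>y z. y \<in> orbit f x \<inter> \<Lambda> \<and> z \<in> orbit f x \<inter> \<Lambda> \<longrightarrow> y = z)) \<longleftrightarrow> \<not> P"
  proof
    assume H: "(\<forall>x\<in>\<Lambda>. \<not> periodic_point f x) \<and>
          (\<forall>x\<in>M. \<forall>y z. y \<in> orbit f x \<inter> \<Lambda> \<and> z \<in> orbit f x \<inter> \<Lambda> \<longrightarrow> y = z)"
    show "\<not> P"
    proof
      assume P
      then obtain y k where yk: "k > 0" "y \<in> \<Lambda>" "(f ^^ k) y \<in> \<Lambda>" unfolding P_def by blast
      have "y \<in> M" using yk assms(4,6) by blast
      moreover have "y \<in> orbit f y" unfolding orbit_def by (auto intro: exI[of _ 0])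
      moreover have "(f ^^ k) y \<in> orbit f y" unfolding orbit_def by auto
      ultimately have "(f ^^ k) y = y" using H yk by blast
      then show False using H yk unfolding periodic_point_def by blast
    qed
  next
    assume nP: "\<not> P"
    show "(\<forall>x\<in>\<Lambda>. \<not> periodic_point f x) \<and>
          (\<forall>x\<in>M. \<forall>y z. y \<in> orbit f x \<inter> \<Lambda> \<and> z \<in> orbit f x \<inter> \<Lambda> \<longrightarrow> y = z)"
    proof safe
      fix x assume "x \<in> \<Lambda>" "periodic_point f x"
      then show False using nP unfolding P_def periodic_point_def by (metis less_not_refl)
    next
      fix x y z assume y: "y \<in> orbit f x" "y \<in> \<Lambda>" and z: "z \<in> orbit f x" "z \<in> \<Lambda>"
      obtain a where a: "y = (f ^^ a) x" using y unfolding orbit_def by blast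
      obtain b where b: "z = (f ^^ b) x" using z unfolding orbit_def by blast
      show "y = z"
      proof (cases a b rule: linorder_cases)
        case less
        then have "z = (f ^^ (b - a + a)) x" using b by simp
        then have "z = (f ^^ (b - a)) y" using a by (simp add: funpow_add)
        moreover have "b - a > 0" using less by simp
        ultimately show ?thesis using nP y z unfolding P_def by blast
      next
        case equal then show ?thesis using a b by simp
      next
        case greater
        then have "y = (f ^^ (a - b + b)) x" using a by simp
        then have "y = (f ^^ (a - b)) z" using b by (simp add: funpow_add)
        moreover have "a - b > 0" using greater by simp
        ultimately show ?thesis using nP y z unfolding P_def by blast
      qed
    qed
  qed
  have "(\<lambda>n. period f (U n)) \<longlonglongrightarrow> \<infinity> \<longleftrightarrow> \<not> P"
  proof
    assume T: "(\<lambda>n. period f (U n)) \<longlonglongrightarrow> \<infinity>"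
    show "\<not> P"
    proof
      assume P
      then obtain y k where yk: "k > 0" "y \<in> \<Lambda>" "(f ^^ k) y \<in> \<Lambda>" unfolding P_def by blast
      have "eventually (\<lambda>n. enat k < period f (U n)) sequentially"
        using T by (simp add: order_tendsto_iff)
      then obtain n where "enat k < period f (U n)" by (auto simp: eventually_sequentially)
      moreover have "period f (U n) \<le> enat k"
        by (rule period_le) (use yk assms(6) in auto)
      ultimately show False by simp
    qed
  next
    assume nP: "\<not> P"
    have S: "\<exists>N. \<forall>n\<ge>N. \<forall>u\<in>U n. (f ^^ k) u \<notin> U n" if "k > 0" for k
    proof (rule ccontr)
      assume neg: "\<not> ?thesis"
      have all: "\<forall>n. \<exists>u\<in>U n. (f ^^ k) u \<in> U n"
      proof
        fix n
        obtain m u where "m \<ge> n" "u \<in> U m" "(f ^^ k) u \<in> U m"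
          using neg by blast
        moreover have "U m \<subseteq> U n" using mono \<open>m \<ge> n\<close> by blast
        ultimately show "\<exists>u\<in>U n. (f ^^ k) u \<in> U n" by blast
      qed
      then obtain u where u: "\<And>n. u n \<in> U n" "\<And>n. (f ^^ k) (u n) \<in> U n" by metis
      have "seq_compact M" using assms(1) by (rule compact_imp_seq_compact)
      moreover have "\<forall>n. u n \<in> M" using u assms(4) by blast
      ultimately obtain y r where yr: "y \<in> M" "strict_mono r" "(u \<circ> r) \<longlonglongrightarrow> y"
        by (rule seq_compactE)
      have fc: "continuous_on M (f ^^ k)" using funpow_cont[OF assms(2,3)] by blast
      have "((\<lambda>n. (f ^^ k) ((u \<circ> r) n)) \<longlonglongrightarrow> (f ^^ k) y)"
        by (rule continuous_on_tendsto_compose[OF fc yr(3) yr(1)])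
           (use \<open>\<forall>n. u n \<in> M\<close> in auto)
      note fy = this
      have ev: "eventually (\<lambda>n. u (r n) \<in> U N \<and> (f ^^ k) (u (r n)) \<in> U N) sequentially" for N
      proof -
        have "u (r n) \<in> U N \<and> (f ^^ k) (u (r n)) \<in> U N" if "n \<ge> N" for n
        proof -
          have "r n \<ge> N" using seq_suble[OF yr(2), of n] that by linarith
          then have "U (r n) \<subseteq> U N" using mono by blast
          then show ?thesis using u by blast
        qed
        then have "\<forall>n\<ge>N. u (r n) \<in> U N \<and> (f ^^ k) (u (r n)) \<in> U N" by blast
        then show ?thesis by (auto simp: eventually_sequentially)
      qed
      have "y \<in> closure (U N)" for N
        by (rule Lim_in_closed_set[OF closed_closure _ _ yr(3)])
           (use ev[of N] in \<open>auto elim: eventually_mono intro: closure_subset[THEN subsetD]\<close>)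
      moreover have "(f ^^ k) y \<in> closure (U N)" for N
        by (rule Lim_in_closed_set[OF closed_closure _ _ fy])
           (use ev[of N] in \<open>auto elim: eventually_mono intro: closure_subset[THEN subsetD]\<close>)
      ultimately have "y \<in> \<Lambda>" "(f ^^ k) y \<in> \<Lambda>" using assms(6,7) by auto
      then show False using nP that unfolding P_def by blast
    qed
    show "(\<lambda>n. period f (U n)) \<longlonglongrightarrow> \<infinity>"
      unfolding order_tendsto_iff
    proof safe
      fix l :: enat assume "l < \<infinity>"
      then obtain K where K: "l = enat K" by (cases l) auto
      have "\<forall>k\<in>{1..K}. \<exists>N. \<forall>n\<ge>N. \<forall>u\<in>U n. (f ^^ k) u \<notin> U n" using S by auto
      then have "\<forall>k\<in>{1..K}. eventually (\<lambda>n. \<forall>u\<in>U n. (f ^^ k) u \<notin> U n) sequentially"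
        by (simp add: eventually_sequentially)
      then have "eventually (\<lambda>n. \<forall>k\<in>{1..K}. \<forall>u\<in>U n. (f ^^ k) u \<notin> U n) sequentially"
        by (simp add: eventually_ball_finite)
      then show "eventually (\<lambda>n. l < period f (U n)) sequentially"
      proof (rule eventually_mono)
        fix n assume "\<forall>k\<in>{1..K}. \<forall>u\<in>U n. (f ^^ k) u \<notin> U n"
        then have "enat K < period f (U n)" by (intro period_gt) auto
        then show "l < period f (U n)" using K by simp
      qed
    qed auto
  qed
  then show ?thesis using R by simp
qed

end
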